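(* Let $d,a,b$ be positive integers, $r=(d+2b)/d$, $R=(a+d)/d$, and assume $R\ge 3r$. Define, for $t\in\mathbb C\setminus\{\pm1,\pm r\}$, \[ \Phi(t)=d\log|t+r|-d\log|t-r|+(a+d)\bigl(\log|t-1|-\log|t+1|\bigr). \] Then for each $0\le\theta\le\pi/2$ there is a unique $u_\theta>0$ with $\Phi(r+u_\theta e^{i\theta})=0$; moreover $\Phi(r+ue^{i\theta})>0$ for $0<u<u_\theta$ and $\Phi(r+ue^{i\theta})<0$ for $u>u_\theta$. *)

theory Defs
  imports "HOL-Analysis.Analysis"
begin

definition Phi :: "nat \<Rightarrow> nat \<Rightarrow> nat \<Rightarrow> complex \<Rightarrow> real" where
  "Phi d a b t = (let r = complex_of_real ((real d + 2 * real b) / real d) in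
     real d * ln (cmod (t + r)) - real d * ln (cmod (t - r))
     + (real a + real d) * (ln (cmod (t - 1)) - ln (cmod (t + 1))))"

end

theory Submission
  imports Defs
begin

definition E :: "real \<Rightarrow> real \<Rightarrow> real \<Rightarrow> real" where
  "E k c u = u^2 + 2*k*c*u + k^2"

definition psi :: "real \<Rightarrow> real \<Rightarrow> real \<Rightarrow> real \<Rightarrow> real" where
  "psi r R c u = ln (E (2*r) c u) - 2 * ln u + R * (ln (E (r-1) c u) - ln (E (r+1) c u))"

definition psid :: "real \<Rightarrow> real \<Rightarrow> real \<Rightarrow> real \<Rightarrow> real" where
  "psid r R c u = (2*u+4*r*c)/E (2*r) c u - 2/u
     + R*((2*u+2*(r-1)*c)/E (r-1) c u - (2*u+2*(r+1)*c)/E (r+1) c u)"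

definition Kf :: "real \<Rightarrow> real \<Rightarrow> real \<Rightarrow> real \<Rightarrow> real" where
  "Kf r R c u = 4*c*(r-R)*u^4 + 8*r*(r-R)*(1+2*c^2)*u^3
     + (4*c*R + 8*r*c - 16*r*c^3 - 52*r^2*c*R + 40*r^3*c + 16*r^3*c^3)*u^2
     + (16*r*c^2*R + 16*r^2 - 48*r^2*c^2 - 32*r^3*R - 16*r^3*c^2*R + 16*r^4 + 48*r^4*c^2)*u
     + (4*r*c + 16*r^2*c*R - 40*r^3*c - 16*r^4*c*R + 36*r^5*c)
     + 8*r^2*(r^2-1)^2/u"

lemma E_pos: "k > 0 \<Longrightarrow> c \<ge> 0 \<Longrightarrow> u > 0 \<Longrightarrow> E k c u > 0"
  unfolding E_def by (simp add: add_pos_nonneg add_nonneg_pos)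

lemma psi_deriv:
  assumes "r > 1" "c \<ge> 0" "u > 0"
  shows "(psi r R c has_real_derivative psid r R c u) (at u)"
proof -
  have p1: "E (2*r) c u > 0" "E (r-1) c u > 0" "E (r+1) c u > 0"
    using assms by (auto intro!: E_pos)
  show ?thesis
    unfolding psi_def[abs_def] psid_def
    by (rule derivative_eq_intros refl | use p1 assms in \<open>simp add: E_def\<close>)+
qed

lemma psid_K:
  assumes "r > 1" "c \<ge> 0" "u > 0"
  shows "psid r R c u = - Kf r R c u / (E (2*r) c u * E (r-1) c u * E (r+1) c u)"
proof -
  define A where "A = E (2*r) c u"
  define B where "B = E (r-1) c u"
  define C where "C = E (r+1) c u"
  have p1: "A > 0" "B > 0" "C > 0"
    using assms by (auto intro!: E_pos simp: A_def B_def C_def)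
  have "psid r R c u * (A*B*C*u) = (2*u+4*r*c)*B*C*u - 2*A*B*C
       + R*((2*u+2*(r-1)*c)*A*C*u - (2*u+2*(r+1)*c)*A*B*u)"
    using p1 assms unfolding psid_def A_def[symmetric] B_def[symmetric] C_def[symmetric]
    by (simp add: field_simps)
  also have "\<dots> = - (Kf r R c u * u)"
    unfolding A_def B_def C_def E_def Kf_def using assms
    by (simp add: field_simps) (simp add: algebra_simps eval_nat_numeral)
  finally have "(psid r R c u * (A*B*C))*u = (- Kf r R c u) * u" by (simp add: algebra_simps)
  then have "psid r R c u * (A*B*C) = - Kf r R c u" using assms(3)
    by (metis mult_cancel_right less_irrefl mult_minus_left)
  then show ?thesis using p1 assms unfolding A_def[symmetric] B_def[symmetric] C_def[symmetric]
    by (simp add: field_simps)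
qed
lemma K_mono:
  assumes r: "r > 1" and R: "R \<ge> 3*r" and c: "0 \<le> c" "c \<le> 1" and ab: "0 < a" "a < b"
  shows "Kf r R c b < Kf r R c a"
proof -
  have q0: "4*c*(r-R) \<le> 0" using r R c by (simp add: mult_nonneg_nonpos)
  have q1a: "8*r*(r-R) \<le> 0" using r R by (simp add: mult_nonneg_nonpos)
  have q1: "8*r*(r-R)*(1+2*c^2) \<le> 0"
    by (rule mult_nonpos_nonneg[OF q1a]) (simp add: add_nonneg_nonneg)
  have c2: "c^2 \<le> 1" using c by (simp add: power_le_one)
  have rr: "1 < r*r" using less_1_mult[OF r r] .
  have X2: "R*(1-13*r^2) + 2*r - 4*r*c^2 + 10*r^3 + 4*r^3*c^2 \<le> 0"
  proof -
    have "R*(1-13*r^2) \<le> 3*r*(1-13*r^2)"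
      using R r rr by (intro mult_right_mono_neg) (auto simp: power2_eq_square)
    moreover have "4*r*c^2*(r^2-1) \<le> 4*r*(r^2-1)"
    proof -
      have pos: "0 \<le> 4*r*(r^2-1)" using r rr by (simp add: power2_eq_square)
      have "c^2*(4*r*(r^2-1)) \<le> 4*r*(r^2-1)" using mult_right_mono[OF c2 pos] by simp
      then show ?thesis by (simp add: algebra_simps)
    qed
    moreover have "r - 25*r^3 < 0"
    proof -
      have "r - 25*r^3 = r*(1 - 25*(r*r))" by (simp add: power3_eq_cube algebra_simps)
      moreover have "1 - 25*(r*r) < 0" using rr by linarith
      ultimately show ?thesis using r by (simp add: mult_pos_neg)
    qed
    ultimately show ?thesis by (simp add: algebra_simps power3_eq_cube power2_eq_square)
  qed
  have q2: "4*c*R + 8*r*c - 16*r*c^3 - 52*r^2*c*R + 40*r^3*c + 16*r^3*c^3 \<le> 0"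
  proof -
    have "4*c*R + 8*r*c - 16*r*c^3 - 52*r^2*c*R + 40*r^3*c + 16*r^3*c^3
        = 4*c*(R*(1-13*r^2) + 2*r - 4*r*c^2 + 10*r^3 + 4*r^3*c^2)"
      by (simp add: algebra_simps power2_eq_square power3_eq_cube)
    also have "\<dots> \<le> 0" using X2 c by (simp add: mult_nonneg_nonpos)
    finally show ?thesis .
  qed
  have X3: "R*(c^2 - 2*r^2 - r^2*c^2) + r - 3*r*c^2 + r^3 + 3*r^3*c^2 \<le> 0"
  proof -
    have h0: "0 \<le> r^2*c^2" by simp
    have h1: "r^2 = r*r" by (simp add: power2_eq_square)
    have neg: "c^2 - 2*r^2 - r^2*c^2 \<le> 0" using h0 h1 c2 rr by linarith
    have "R*(c^2 - 2*r^2 - r^2*c^2) \<le> 3*r*(c^2 - 2*r^2 - r^2*c^2)"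
      using R neg by (intro mult_right_mono_neg) auto
    moreover have "r - 5*r^3 < 0"
    proof -
      have "r - 5*r^3 = r*(1 - 5*(r*r))" by (simp add: power3_eq_cube algebra_simps)
      moreover have "1 - 5*(r*r) < 0" using rr by linarith
      ultimately show ?thesis using r by (simp add: mult_pos_neg)
    qed
    ultimately show ?thesis by (simp add: algebra_simps power3_eq_cube power2_eq_square)
  qed
  have q3: "16*r*c^2*R + 16*r^2 - 48*r^2*c^2 - 32*r^3*R - 16*r^3*c^2*R + 16*r^4 + 48*r^4*c^2 \<le> 0"
  proof -
    have "16*r*c^2*R + 16*r^2 - 48*r^2*c^2 - 32*r^3*R - 16*r^3*c^2*R + 16*r^4 + 48*r^4*c^2
        = 16*r*(R*(c^2 - 2*r^2 - r^2*c^2) + r - 3*r*c^2 + r^3 + 3*r^3*c^2)"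
      by (simp add: algebra_simps power2_eq_square power3_eq_cube power4_eq_xxxx)
    also have "\<dots> \<le> 0" using X3 r by (simp add: mult_nonneg_nonpos)
    finally show ?thesis .
  qed
  have rr2: "r^2 - 1 \<noteq> 0" using rr by (simp add: power2_eq_square)
  have q5: "8*r^2*(r^2-1)^2 > 0" using r rr2 by simp
  have t0: "4*c*(r-R)*b^4 \<le> 4*c*(r-R)*a^4"
    using q0 ab by (intro mult_left_mono_neg power_mono) auto
  have t1: "8*r*(r-R)*(1+2*c^2)*b^3 \<le> 8*r*(r-R)*(1+2*c^2)*a^3"
    using q1 ab by (intro mult_left_mono_neg power_mono) auto
  have t2: "(4*c*R + 8*r*c - 16*r*c^3 - 52*r^2*c*R + 40*r^3*c + 16*r^3*c^3)*b^2
      \<le> (4*c*R + 8*r*c - 16*r*c^3 - 52*r^2*c*R + 40*r^3*c + 16*r^3*c^3)*a^2"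
    using q2 ab by (intro mult_left_mono_neg power_mono) auto
  have t3: "(16*r*c^2*R + 16*r^2 - 48*r^2*c^2 - 32*r^3*R - 16*r^3*c^2*R + 16*r^4 + 48*r^4*c^2)*b
      \<le> (16*r*c^2*R + 16*r^2 - 48*r^2*c^2 - 32*r^3*R - 16*r^3*c^2*R + 16*r^4 + 48*r^4*c^2)*a"
    using q3 ab by (intro mult_left_mono_neg) auto
  have t5: "8*r^2*(r^2-1)^2/b < 8*r^2*(r^2-1)^2/a"
    using q5 ab by (intro divide_strict_left_mono) auto
  show ?thesis unfolding Kf_def using t0 t1 t2 t3 t5 by linarith
qed

context
  fixes r R c :: real
  assumes r: "r > 1" and R: "R \<ge> 3*r" and c0: "0 \<le> c" and c1: "c \<le> 1"
begin

lemma Es_pos: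
  assumes "u > 0"
  shows "E (2*r) c u > 0" "E (r-1) c u > 0" "E (r+1) c u > 0"
  using assms r c0 by (auto intro!: E_pos)

lemma mvt:
  assumes "0 < a" "a < b"
  shows "\<exists>z. a < z \<and> z < b \<and> psi r R c b - psi r R c a = (b - a) * psid r R c z"
  using assms by (intro MVT2 psi_deriv r c0) auto

lemma psid_neg: "u > 0 \<Longrightarrow> Kf r R c u > 0 \<Longrightarrow> psid r R c u < 0"
proof -
  assume u: "u > 0" and K: "Kf r R c u > 0"
  have D: "0 < E (2*r) c u * E (r-1) c u * E (r+1) c u" using Es_pos[OF u] by simp
  have "Kf r R c u / (E (2*r) c u * E (r-1) c u * E (r+1) c u) > 0" using K D by (rule divide_pos_pos)
  then show ?thesis using psid_K[OF r c0 u, of R] by simp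
qed

lemma psid_pos: "u > 0 \<Longrightarrow> Kf r R c u < 0 \<Longrightarrow> psid r R c u > 0"
proof -
  assume u: "u > 0" and K: "Kf r R c u < 0"
  have D: "0 < E (2*r) c u * E (r-1) c u * E (r+1) c u" using Es_pos[OF u] by simp
  have "Kf r R c u / (E (2*r) c u * E (r-1) c u * E (r+1) c u) < 0" using K D by (rule divide_neg_pos)
  then show ?thesis using psid_K[OF r c0 u, of R] by simp
qed

lemma Kdec: "0 < a \<Longrightarrow> a < b \<Longrightarrow> Kf r R c b < Kf r R c a"
  using K_mono[OF r R c0 c1] by blast

lemma large: "\<exists>w>v. psi r R c w < 0"
proof -
  define w where "w = max v 0 + 2*(r+1) + 1"
  have w: "w > v" "w > 2*(r+1)" "w > 0" using r by (auto simp: w_def)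
  note Ep = Es_pos[OF w(3)]
  define E1 where "E1 = E (2*r) c w"
  define E2 where "E2 = E (r+1) c w"
  define E3 where "E3 = E (r-1) c w"
  have Ep': "E1 > 0" "E2 > 0" "E3 > 0" using Ep by (auto simp: E1_def E2_def E3_def)
  have w2: "w^2 > 0" using w by simp
  have a1: "ln E1 - 2 * ln w \<le> E1/w^2 - 1"
  proof -
    have "ln E1 - 2 * ln w = ln (E1/w^2)"
      using Ep' w by (simp add: ln_divide_pos ln_realpow)
    also have "\<dots> \<le> E1/w^2 - 1" using Ep' w2 by (intro ln_le_minus_one) simp
    finally show ?thesis .
  qed
  have a2: "ln E3 - ln E2 \<le> E3/E2 - 1"
  proof -
    have "ln E3 - ln E2 = ln (E3/E2)" using Ep' by (simp add: ln_divide_pos)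
    also have "\<dots> \<le> E3/E2 - 1" using Ep' by (intro ln_le_minus_one) simp
    finally show ?thesis .
  qed
  have e1: "E1/w^2 - 1 = 4*(c*w+r)*r/w^2"
  proof -
    have "E1/w^2 - 1 = (E1 - w^2)/w^2" using w2 by (simp add: field_simps)
    also have "E1 - w^2 = 4*(c*w+r)*r" by (simp add: E1_def E_def algebra_simps power2_eq_square)
    finally show ?thesis .
  qed
  have e2: "E3/E2 - 1 = - (4*(c*w+r)/E2)"
    using Ep' by (simp add: E2_def E3_def E_def field_simps power2_eq_square)
  have cwr: "c*w + r > 0" using c0 w r by (simp add: add_nonneg_pos)
  have E2b: "E2 < 3*w^2"
  proof -
    have "2*(r+1)*c*w \<le> 2*(r+1)*w" using c1 w r by (simp add: mult_left_le)
    moreover have "2*(r+1)*w < w*w" using w by (intro mult_strict_right_mono) auto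
    moreover have "(r+1)^2 < w*w"
    proof -
      have "r+1 < w" using w(2) r by (smt (verit))
      then have "(r+1)*(r+1) < w*w" using r by (intro mult_strict_mono) auto
      then show ?thesis by (simp add: power2_eq_square)
    qed
    ultimately show ?thesis by (simp add: E2_def E_def power2_eq_square)
  qed
  have key: "r * E2 < R * w^2"
  proof -
    have "r * E2 < r * (3*w^2)" using E2b r by simp
    also have "\<dots> \<le> R * w^2" using R w2 by (simp add: mult_right_mono)
    finally show ?thesis .
  qed
  have "4*(c*w+r)*r/w^2 < R * (4*(c*w+r)/E2)"
  proof -
    have "4*(c*w+r)*r/w^2 = (4*(c*w+r))*(r*E2)/(w^2*E2)" using Ep' by simp
    also have "\<dots> < (4*(c*w+r))*(R*w^2)/(w^2*E2)"
      using key cwr Ep' w2 by (intro divide_strict_right_mono mult_strict_left_mono) auto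
    also have "\<dots> = R * (4*(c*w+r)/E2)" using w2 by simp
    finally show ?thesis .
  qed
  moreover have "psi r R c w \<le> 4*(c*w+r)*r/w^2 - R * (4*(c*w+r)/E2)"
  proof -
    have "R * (ln E3 - ln E2) \<le> R * (E3/E2 - 1)" using a2 R r by (intro mult_left_mono) auto
    then show ?thesis using a1 e1 e2
      unfolding psi_def E1_def[symmetric] E2_def[symmetric] E3_def[symmetric] by simp
  qed
  ultimately show ?thesis using w by (intro exI[of _ w]) auto
qed

lemma small: "\<exists>p>0. psi r R c p > 0"
proof -
  define C1 where "C1 = (4+4*r)/(r-1)^2"
  define M where "M = (ln (4*r^2) - R*C1)/2 - 1"
  define p where "p = min 1 (exp M)"
  have p: "p > 0" "p \<le> 1" "ln p \<le> M"
  proof -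
    show "p > 0" "p \<le> 1" by (auto simp: p_def)
    have "ln p \<le> ln (exp M)" using \<open>p > 0\<close> by (subst ln_le_cancel_iff) (auto simp: p_def)
    then show "ln p \<le> M" by simp
  qed
  note Ep = Es_pos[OF p(1)]
  define E1 where "E1 = E (2*r) c p"
  define E2 where "E2 = E (r+1) c p"
  define E3 where "E3 = E (r-1) c p"
  have Ep': "E1 > 0" "E2 > 0" "E3 > 0" using Ep by (auto simp: E1_def E2_def E3_def)
  have b1: "ln E1 \<ge> ln (4*r^2)"
  proof -
    have "4*r^2 \<le> E1" using p c0 r by (simp add: E1_def E_def power2_eq_square)
    then show ?thesis using r Ep' by (subst ln_le_cancel_iff) auto
  qed
  have b2: "ln E3 - ln E2 \<ge> - C1"
  proof -
    have "ln (E2/E3) \<le> E2/E3 - 1" using Ep' by (intro ln_le_minus_one) simp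
    moreover have "ln (E2/E3) = ln E2 - ln E3" using Ep' by (simp add: ln_divide_pos)
    moreover have "E2/E3 - 1 = (4*c*p + 4*r)/E3"
      using Ep' by (simp add: E2_def E3_def E_def field_simps power2_eq_square)
    moreover have "(4*c*p + 4*r)/E3 \<le> (4+4*r)/(r-1)^2"
    proof (rule frac_le)
      show "0 \<le> 4+4*r" using r by simp
      have "c*p \<le> 1" using c0 c1 p by (simp add: mult_le_one)
      then show "4*c*p + 4*r \<le> 4+4*r" by simp
      show "0 < (r-1)^2" using r by simp
      show "(r-1)^2 \<le> E3" using p c0 r by (simp add: E3_def E_def)
    qed
    ultimately show ?thesis unfolding C1_def by linarith
  qed
  have "psi r R c p = ln E1 - 2 * ln p + R * (ln E3 - ln E2)"
    by (simp add: psi_def E1_def E2_def E3_def)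
  moreover have "R * (ln E3 - ln E2) \<ge> R * (- C1)" using b2 R r by (intro mult_left_mono) auto
  ultimately have "psi r R c p \<ge> ln (4*r^2) - 2*M - R*C1" using b1 p by linarith
  moreover have "ln (4*r^2) - 2*M - R*C1 = 2" by (simp add: M_def field_simps)
  ultimately show ?thesis using p by (intro exI[of _ p]) auto
qed

lemma zero_props:
  assumes z: "z > 0" "psi r R c z = 0"
  shows "(\<forall>v. 0 < v \<and> v < z \<longrightarrow> psi r R c v > 0) \<and> (\<forall>v. v > z \<longrightarrow> psi r R c v < 0)"
proof -
  have incr: "psi r R c a < psi r R c b" if "0 < y" "Kf r R c y \<le> 0" "y \<le> a" "a < b" for y a b
  proof -
    have a0: "0 < a" using that by linarith
    obtain \<eta> where e: "a < \<eta>" "\<eta> < b" "psi r R c b - psi r R c a = (b - a) * psid r R c \<eta>"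
      using mvt[of a b] a0 \<open>a < b\<close> by auto
    have "Kf r R c \<eta> < Kf r R c y" using Kdec[of y \<eta>] that e by auto
    then have "psid r R c \<eta> > 0" using psid_pos[of \<eta>] that e by auto
    moreover have "b - a > 0" using that by simp
    ultimately have "(b - a) * psid r R c \<eta> > 0" by simp
    then show ?thesis using e(3) by linarith
  qed
  have Kz: "Kf r R c z > 0"
  proof (rule ccontr)
    assume "\<not> Kf r R c z > 0"
    then have "Kf r R c z \<le> 0" by simp
    obtain w where w: "w > z" "psi r R c w < 0" using large[of z] by auto
    have "psi r R c z < psi r R c w" using incr[OF z(1) \<open>Kf r R c z \<le> 0\<close> order_refl w(1)] .
    then show False using z w by simp
  qed
  have left: "psi r R c v > 0" if vz: "0 < v" "v < z" for v
  proof -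
    obtain \<eta> where e: "v < \<eta>" "\<eta> < z" "psi r R c z - psi r R c v = (z - v) * psid r R c \<eta>"
      using mvt[OF vz(1) vz(2)] by blast
    have "Kf r R c \<eta> > Kf r R c z" using Kdec[of \<eta> z] that e by auto
    then have "psid r R c \<eta> < 0" using psid_neg[of \<eta>] that e Kz by auto
    then have "(z - v) * psid r R c \<eta> < 0" using that by (simp add: mult_pos_neg)
    then show ?thesis using e z by simp
  qed
  have right: "psi r R c v < 0" if vz: "v > z" for v
  proof (rule ccontr)
    assume "\<not> psi r R c v < 0"
    then have pv: "psi r R c v \<ge> 0" by simp
    obtain \<eta> where e: "z < \<eta>" "\<eta> < v" "psi r R c v - psi r R c z = (v - z) * psid r R c \<eta>"
      using mvt[OF z(1) vz] by blast
    have "psid r R c \<eta> \<ge> 0"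
    proof (rule ccontr)
      assume "\<not> psid r R c \<eta> \<ge> 0"
      then have "(v - z) * psid r R c \<eta> < 0" using that by (simp add: mult_pos_neg)
      then show False using e z pv by simp
    qed
    moreover have e0: "0 < \<eta>" using e z by linarith
    ultimately have Ke: "Kf r R c \<eta> \<le> 0" using psid_neg[OF e0] by (cases "Kf r R c \<eta> > 0") auto
    obtain w where w: "w > v" "psi r R c w < 0" using large[of v] by auto
    have "psi r R c v < psi r R c w" using incr[of \<eta> v w] Ke e z w by auto
    then show False using pv w by simp
  qed
  show ?thesis using left right by blast
qed

lemma psi_main:
  "\<exists>!u. u > 0 \<and> psi r R c u = 0 \<and> (\<forall>v. 0 < v \<and> v < u \<longrightarrow> psi r R c v > 0)
      \<and> (\<forall>v. v > u \<longrightarrow> psi r R c v < 0)"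
proof -
  obtain p where p: "p > 0" "psi r R c p > 0" using small by auto
  obtain w where w: "w > p" "psi r R c w < 0" using large[of p] by auto
  have cont: "continuous_on {p..w} (psi r R c)"
    using p w by (intro continuous_at_imp_continuous_on ballI DERIV_isCont[OF psi_deriv[OF r c0]]) auto
  obtain z where z: "p \<le> z" "z \<le> w" "psi r R c z = 0"
    using IVT2'[of "psi r R c" w 0 p, OF _ _ _ cont] p w by auto
  have zp: "z > 0" using z p by simp
  show ?thesis
  proof (rule ex1I[of _ z])
    show "z > 0 \<and> psi r R c z = 0 \<and> (\<forall>v. 0 < v \<and> v < z \<longrightarrow> psi r R c v > 0)
      \<and> (\<forall>v. v > z \<longrightarrow> psi r R c v < 0)" using zp z zero_props[OF zp z(3)] by blast
  next
    fix y assume y: "y > 0 \<and> psi r R c y = 0 \<and> (\<forall>v. 0 < v \<and> v < y \<longrightarrow> psi r R c v > 0)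
      \<and> (\<forall>v. v > y \<longrightarrow> psi r R c v < 0)"
    have zz: "\<forall>v. v > z \<longrightarrow> psi r R c v < 0" "\<forall>v. 0 < v \<and> v < z \<longrightarrow> psi r R c v > 0"
      using zero_props[OF zp z(3)] by auto
    show "y = z"
    proof (rule ccontr)
      assume "y \<noteq> z"
      then have "y < z \<or> y > z" by auto
      then show False
      proof
        assume "y < z" then show False using zz(2) y by auto
      next
        assume "y > z" then show False using zz(1) y by auto
      qed
    qed
  qed
qed

end

lemma cmod_E: "cmod (complex_of_real k + complex_of_real u * cis t) = sqrt (E k (cos t) u)"
proof -
  have "(k + u * cos t)^2 + (u * sin t)^2 = E k (cos t) u"
  proof -
    have gen: "(k + u * x)^2 + (u * y)^2 = k^2 + 2*k*x*u + u^2*(y^2 + x^2)" for x y :: real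
      by (simp add: algebra_simps power2_eq_square)
    have "(k + u * cos t)^2 + (u * sin t)^2 = k^2 + 2*k*cos t*u + u^2*((sin t)^2 + (cos t)^2)"
      by (rule gen)
    also have "\<dots> = k^2 + 2*k*cos t*u + u^2" by (simp only: sin_cos_squared_add mult_1_right)
    finally show ?thesis by (simp add: E_def add_ac)
  qed
  then show ?thesis by (simp add: norm_complex_def cis.sel)
qed

lemma Phi_psi:
  fixes d a b :: nat and t u :: real
  assumes d: "d > 0" and b: "b > 0" and u: "u > 0" and t: "0 \<le> cos t"
  defines "r \<equiv> (real d + 2 * real b) / real d"
  shows "Phi d a b (complex_of_real r + complex_of_real u * cis t)
      = real d / 2 * psi r ((real a + real d) / real d) (cos t) u"
proof -
  have r1: "r > 1" using d b by (simp add: r_def field_simps)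
  have Ep: "E (2*r) (cos t) u > 0" "E (r-1) (cos t) u > 0" "E (r+1) (cos t) u > 0"
    using r1 t u by (auto intro!: E_pos)
  have h1: "complex_of_real r + complex_of_real u * cis t + complex_of_real r
      = complex_of_real (2*r) + complex_of_real u * cis t" by simp
  have h2: "complex_of_real r + complex_of_real u * cis t - complex_of_real r
      = complex_of_real u * cis t" by simp
  have h3: "complex_of_real r + complex_of_real u * cis t - 1
      = complex_of_real (r-1) + complex_of_real u * cis t" by simp
  have h4: "complex_of_real r + complex_of_real u * cis t + 1
      = complex_of_real (r+1) + complex_of_real u * cis t" by simp
  have n2: "cmod (complex_of_real u * cis t) = u" using u by (simp add: norm_mult)
  have "Phi d a b (complex_of_real r + complex_of_real u * cis t)
      = real d * (ln (E (2*r) (cos t) u) / 2) - real d * ln u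
        + (real a + real d) * (ln (E (r-1) (cos t) u) / 2 - ln (E (r+1) (cos t) u) / 2)"
    unfolding Phi_def Let_def r_def[symmetric] h1 h2 h3 h4 n2 cmod_E
    using Ep by (simp add: ln_sqrt)
  also have "\<dots> = real d / 2 * psi r ((real a + real d) / real d) (cos t) u"
    using d u by (simp add: psi_def field_simps ln_realpow)
  finally show ?thesis .
qed

theorem lemma4p6:
  fixes d a b :: nat and \<theta> :: real
  assumes "d > 0" and "a > 0" and "b > 0"
    and "(real a + real d) / real d \<ge> 3 * ((real d + 2 * real b) / real d)"
    and "0 \<le> \<theta>" and "\<theta> \<le> pi / 2"
  shows "\<exists>!u. u > 0 \<and>
      Phi d a b (complex_of_real ((real d + 2 * real b) / real d) + complex_of_real u * cis \<theta>) = 0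
    \<and> (\<forall>v. 0 < v \<and> v < u \<longrightarrow>
          Phi d a b (complex_of_real ((real d + 2 * real b) / real d) + complex_of_real v * cis \<theta>) > 0)
    \<and> (\<forall>v. v > u \<longrightarrow>
          Phi d a b (complex_of_real ((real d + 2 * real b) / real d) + complex_of_real v * cis \<theta>) < 0)"
proof -
  define r where "r = (real d + 2 * real b) / real d"
  define R where "R = (real a + real d) / real d"
  define c where "c = cos \<theta>"
  have r1: "r > 1" using assms by (simp add: r_def field_simps)
  have R3: "R \<ge> 3*r" using assms(4) by (simp add: r_def R_def)
  have c0: "0 \<le> c" unfolding c_def using assms(5,6) by (intro cos_ge_zero) auto
  have c1: "c \<le> 1" by (simp add: c_def)
  have dpos: "real d / 2 > 0" using assms by simp
  have eq: "Phi d a b (complex_of_real r + complex_of_real u * cis \<theta>) = real d / 2 * psi r R c u"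
    if "u > 0" for u
    using Phi_psi[OF assms(1) assms(3) that, of "\<theta>" a] c0 unfolding r_def R_def c_def by simp
  have sg: "(Phi d a b (complex_of_real r + complex_of_real u * cis \<theta>) = 0 \<longleftrightarrow> psi r R c u = 0)
        \<and> (Phi d a b (complex_of_real r + complex_of_real u * cis \<theta>) > 0 \<longleftrightarrow> psi r R c u > 0)
        \<and> (Phi d a b (complex_of_real r + complex_of_real u * cis \<theta>) < 0 \<longleftrightarrow> psi r R c u < 0)"
    if "u > 0" for u
    unfolding eq[OF that] using dpos by (simp add: zero_less_mult_iff mult_less_0_iff)
  have P: "\<exists>!u. u > 0 \<and> psi r R c u = 0 \<and> (\<forall>v. 0 < v \<and> v < u \<longrightarrow> psi r R c v > 0)
      \<and> (\<forall>v. v > u \<longrightarrow> psi r R c v < 0)"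
    by (rule psi_main[OF r1 R3 c0 c1])
  have iff: "(u > 0 \<and> Phi d a b (complex_of_real r + complex_of_real u * cis \<theta>) = 0
    \<and> (\<forall>v. 0 < v \<and> v < u \<longrightarrow> Phi d a b (complex_of_real r + complex_of_real v * cis \<theta>) > 0)
    \<and> (\<forall>v. v > u \<longrightarrow> Phi d a b (complex_of_real r + complex_of_real v * cis \<theta>) < 0))
    \<longleftrightarrow> (u > 0 \<and> psi r R c u = 0 \<and> (\<forall>v. 0 < v \<and> v < u \<longrightarrow> psi r R c v > 0)
      \<and> (\<forall>v. v > u \<longrightarrow> psi r R c v < 0))" for u
  proof (cases "u > 0")
    case True
    have A: "(\<forall>v. 0 < v \<and> v < u \<longrightarrow> Phi d a b (complex_of_real r + complex_of_real v * cis \<theta>) > 0)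
        \<longleftrightarrow> (\<forall>v. 0 < v \<and> v < u \<longrightarrow> psi r R c v > 0)" using sg by auto
    have B: "(\<forall>v. v > u \<longrightarrow> Phi d a b (complex_of_real r + complex_of_real v * cis \<theta>) < 0)
        \<longleftrightarrow> (\<forall>v. v > u \<longrightarrow> psi r R c v < 0)"
    proof -
      have "v > u \<Longrightarrow> v > 0" for v using True by linarith
      then show ?thesis using sg by (meson)
    qed
    show ?thesis using A B sg[OF True] True by blast
  qed simp
  show ?thesis using P unfolding r_def[symmetric] iff .
qed

end
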